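(* In $2\times2\times3$ Abalone, let $C1$ be the constellation with Black marbles on $c,f,g$ and Gray marbles on $a,d,h$; let $C2$ have Black on $c,f,g$ and Gray on $a,d,e$; let $C3$ have Black on $c,f,g$ and Gray on $d,e,h$. If $C$ is any constellation obtained from $C1$ by a single legal Gray move and $C$ is isomorphic to neither $C2$ nor $C3$, then Black, moving next from $C$, can force a win.
   Context: The $2\times2\times3$ board has 10 hexagonal cells in three vertical columns of sizes 3, 4, 3. In axial coordinates (cells adjacent when differing by $\pm(0,1),\pm(1,0),\pm(1,-1)$) the cells are $a=(0,0)$, $b=(0,1)$, $c=(0,2)$ (left column, bottom to top), $d=(1,-1)$, $e=(1,0)$, $f=(1,1)$, $g=(1,2)$ (middle column, bottom to top), $h=(2,-1)$, $i=(2,0)$, $j=(2,1)$ (right column, bottom to top). Its maximal lines are $a$-$b$-$c$, $d$-$e$-$f$-$g$, $h$-$i$-$j$, $a$-$e$-$i$, $b$-$f$-$j$, $c$-$g$, $d$-$h$, $a$-$d$, $b$-$e$-$h$, $c$-$f$-$i$, $g$-$j$; adjacent cells are consecutive cells of these lines. A constellation assigns each cell black, gray or empty; each player has 3 marbles. Black (Left) and Gray (Right) alternate turns. On a turn a player moves 1, 2 or 3 of their own marbles occupying consecutive cells of a line, one step in one of the six lattice directions. Broadside move (direction not parallel to the group's line, or a single marble): each moved marble must land on an empty board cell. In-line move (direction parallel to the line, group of $k$ marbles): if the cell $X$ beyond the front marble is an empty board cell the group advances; if $X$ holds opponent marbles, forming $m$ consecutive opponent marbles in that direction, the push is legal only if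 $m<k$ and the cell after them is empty or off the board, and then all shift one step, an opponent marble leaving the board being removed; moves with $X$ off the board or holding an own marble are illegal, and one may never move one's own marble off the board. The game ends as soon as one marble is pushed off, the pusher winning; never-ending play is a draw. A player can force a win from a constellation with a given player to move if they have a strategy guaranteeing a push-off in finitely many moves against all opponent play. The symmetries of this board are the identity, the left-right reflection ($a\leftrightarrow h$, $b\leftrightarrow i$, $c\leftrightarrow j$, middle column fixed), the top-bottom reflection ($a\leftrightarrow c$, $d\leftrightarrow g$, $e\leftrightarrow f$, $h\leftrightarrow j$, $b,i$ fixed), and their composition; two constellations are isomorphic if a symmetry maps one onto the other. *)

theory Defs
  imports Main
begin

section \<open>The 2x2x3 Abalone board in axial coordinates\<close>

type_synonym cell = "int \<times> int"

definition cA :: cell where "cA = (0,0)"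
definition cB :: cell where "cB = (0,1)"
definition cC :: cell where "cC = (0,2)"
definition cD :: cell where "cD = (1,-1)"
definition cE :: cell where "cE = (1,0)"
definition cF :: cell where "cF = (1,1)"
definition cG :: cell where "cG = (1,2)"
definition cH :: cell where "cH = (2,-1)"
definition cI :: cell where "cI = (2,0)"
definition cJ :: cell where "cJ = (2,1)"

definition board :: "cell set" where
  "board = {cA, cB, cC, cD, cE, cF, cG, cH, cI, cJ}"

definition linedirs :: "cell set" where
  "linedirs = {(0,1), (1,0), (1,-1)}"

definition negc :: "cell \<Rightarrow> cell" where
  "negc v = (- fst v, - snd v)"

definition dirs :: "cell set" where
  "dirs = linedirs \<union> negc ` linedirs"

definition sh :: "cell \<Rightarrow> cell \<Rightarrow> int \<Rightarrow> cell" where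
  "sh p d i = (fst p + i * fst d, snd p + i * snd d)"

text \<open>A group is k in {1,2,3} own marbles s, s+v, ..., s+(k-1)v along a line
  direction v; d is the direction of motion.\<close>
definition abalone_move :: "cell set \<Rightarrow> cell set \<Rightarrow> cell set \<Rightarrow> cell set \<Rightarrow> bool \<Rightarrow> bool" where
  "abalone_move P Q P' Q' off \<longleftrightarrow>
    (\<exists>s v (k::int) d.
       v \<in> linedirs \<and> 1 \<le> k \<and> k \<le> 3 \<and> d \<in> dirs \<and>
       (let grp = {sh s v i | i. 0 \<le> i \<and> i < k};
            mv = (\<lambda>c. sh c d 1)
        in grp \<subseteq> P \<and>
           P' = (P - grp) \<union> mv ` grp \<and>
           ( 
             ((k = 1 \<or> (d \<noteq> v \<and> d \<noteq> negc v)) \<and>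
              (\<forall>c\<in>grp. mv c \<in> board \<and> mv c \<notin> P \<and> mv c \<notin> Q) \<and>
              Q' = Q \<and> \<not> off)
           \<or> 
             (2 \<le> k \<and> (d = v \<or> d = negc v) \<and>
              (let X = mv (if d = v then sh s v (k - 1) else s)
               in 
                  (X \<in> board \<and> X \<notin> P \<and> X \<notin> Q \<and> Q' = Q \<and> \<not> off)
                \<or> 
                  (\<exists>m::int. 1 \<le> m \<and> m < k \<and>
                     (\<forall>i. 0 \<le> i \<and> i < m \<longrightarrow> sh X d i \<in> Q) \<and>
                     sh X d m \<notin> Q \<and> sh X d m \<notin> P \<and>
                     (let pushed = {sh X d i | i. 0 \<le> i \<and> i < m}
                      in Q' = (Q - pushed) \<union> (mv ` pushed \<inter> board) \<and>
                         off = (sh X d m \<notin> board))))))))"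

text \<open>black_wins B G: with Black on B and Gray on G and Black to move, Black
  can force a push-off in finitely many moves (least fixed point).\<close>
inductive black_wins :: "cell set \<Rightarrow> cell set \<Rightarrow> bool" where
  push_now: "abalone_move B G B' G' True \<Longrightarrow> black_wins B G"
| step: "\<lbrakk> abalone_move B G B' G' False;
           \<exists>G'' B'' off. abalone_move G' B' G'' B'' off;
           \<forall>G'' B'' off. abalone_move G' B' G'' B'' off \<longrightarrow> \<not> off \<and> black_wins B'' G'' \<rbrakk>
         \<Longrightarrow> black_wins B G"

definition sym_lr :: "cell \<Rightarrow> cell" where
  "sym_lr p = (2 - fst p, snd p + fst p - 1)"

definition sym_tb :: "cell \<Rightarrow> cell" where
  "sym_tb p = (fst p, 2 - fst p - snd p)"

definition board_syms :: "(cell \<Rightarrow> cell) set" where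
  "board_syms = {id, sym_lr, sym_tb, sym_lr \<circ> sym_tb}"

text \<open>Constellations are pairs (black cells, gray cells).\<close>
definition isomorphic :: "cell set \<times> cell set \<Rightarrow> cell set \<times> cell set \<Rightarrow> bool" where
  "isomorphic X Y \<longleftrightarrow> (\<exists>\<sigma>\<in>board_syms. \<sigma> ` fst X = fst Y \<and> \<sigma> ` snd X = snd Y)"

definition C1 :: "cell set \<times> cell set" where "C1 = ({cC, cF, cG}, {cA, cD, cH})"
definition C2 :: "cell set \<times> cell set" where "C2 = ({cC, cF, cG}, {cA, cD, cE})"
definition C3 :: "cell set \<times> cell set" where "C3 = ({cC, cF, cG}, {cD, cE, cH})"

end

theory Submission imports Defs begin

definition LDL :: "cell list" where "LDL = [(0,1),(1,0),(1,-1)]"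
definition DL :: "cell list" where "DL = LDL @ map negc LDL"
definition boardL :: "cell list" where "boardL = [cA, cB, cC, cD, cE, cF, cG, cH, cI, cJ]"

definition rng :: "int \<Rightarrow> int \<Rightarrow> int list" where "rng a b = [a..b-1]"

definition body_ex :: "cell \<Rightarrow> cell \<Rightarrow> int \<Rightarrow> cell \<Rightarrow> cell set \<Rightarrow> cell set \<Rightarrow> cell set \<Rightarrow> cell set \<Rightarrow> bool \<Rightarrow> bool" where
 "body_ex s v k d P Q P' Q' off =
       (let grp = sh s v ` set (rng 0 k);
            mv = (\<lambda>c. sh c d 1)
        in grp \<subseteq> P \<and>
           P' = (P - grp) \<union> mv ` grp \<and>
           ( 
             ((k = 1 \<or> (d \<noteq> v \<and> d \<noteq> negc v)) \<and>
              (\<forall>c\<in>grp. mv c \<in> board \<and> mv c \<notin> P \<and> mv c \<notin> Q) \<and>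
              Q' = Q \<and> \<not> off)
           \<or> 
             (2 \<le> k \<and> (d = v \<or> d = negc v) \<and>
              (let X = mv (if d = v then sh s v (k - 1) else s)
               in 
                  (X \<in> board \<and> X \<notin> P \<and> X \<notin> Q \<and> Q' = Q \<and> \<not> off)
                \<or> 
                  (\<exists>m\<in>set (rng 1 k).
                     (\<forall>i\<in>set (rng 0 m). sh X d i \<in> Q) \<and>
                     sh X d m \<notin> Q \<and> sh X d m \<notin> P \<and>
                     (let pushed = sh X d ` set (rng 0 m)
                      in Q' = (Q - pushed) \<union> (mv ` pushed \<inter> board) \<and>
                         off = (sh X d m \<notin> board)))))))"

lemma rng_set: "set (rng a b) = {i. a \<le> i \<and> i < b}"
  by (auto simp: rng_def)

lemma img_eq: "{f i | i. P i} = f ` {i. P i}" by auto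

lemma A: "abalone_move P Q P' Q' off \<longleftrightarrow>
   (\<exists>s v k d. v \<in> linedirs \<and> 1 \<le> k \<and> k \<le> 3 \<and> d \<in> dirs \<and> body_ex s v k d P Q P' Q' off)"
  unfolding abalone_move_def body_ex_def rng_set img_eq Bex_def Ball_def
  by (simp add: Bex_def Ball_def conj_ac cong: conj_cong)

definition cands :: "cell \<Rightarrow> cell \<Rightarrow> int \<Rightarrow> cell \<Rightarrow> cell set \<Rightarrow> cell set \<Rightarrow> (cell set \<times> cell set \<times> bool) list" where
 "cands s v k d P Q =
   (let grp = sh s v ` set (rng 0 k);
        mv = (\<lambda>c. sh c d 1);
        X = mv (if d = v then sh s v (k - 1) else s);
        Qs = Q # map (\<lambda>m. (Q - sh X d ` set (rng 0 m)) \<union> (mv ` (sh X d ` set (rng 0 m)) \<inter> board)) (rng 1 k)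
    in [((P - grp) \<union> mv ` grp, Q', ob). Q' \<leftarrow> Qs, ob \<leftarrow> [False, True]])"

definition mv1 :: "cell \<Rightarrow> cell \<Rightarrow> int \<Rightarrow> cell \<Rightarrow> cell set \<Rightarrow> cell set \<Rightarrow> (cell set \<times> cell set \<times> bool) list" where
 "mv1 s v k d P Q = (if sh s v ` set (rng 0 k) \<subseteq> P then
        filter (\<lambda>(P',Q',ob). body_ex s v k d P Q P' Q' ob) (cands s v k d P Q) else [])"

definition movesS :: "cell set \<Rightarrow> cell set \<Rightarrow> (cell set \<times> cell set \<times> bool) list" where
 "movesS P Q = concat [ mv1 s v k d P Q. s \<leftarrow> boardL, v \<leftarrow> LDL, k \<leftarrow> [1,2,3], d \<leftarrow> DL]"

lemma mem_concat4: "x \<in> set (concat [ f s v k d. s \<leftarrow> xs, v \<leftarrow> ys, k \<leftarrow> zs, d \<leftarrow> ws]) \<longleftrightarrow>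
   (\<exists>s\<in>set xs. \<exists>v\<in>set ys. \<exists>k\<in>set zs. \<exists>d\<in>set ws. x \<in> set (f s v k d))"
  by (simp add: set_concat) 

lemma mem_mv1: "(P', Q', off) \<in> set (mv1 s v k d P Q) \<longleftrightarrow>
   sh s v ` set (rng 0 k) \<subseteq> P \<and> (P', Q', off) \<in> set (cands s v k d P Q) \<and> body_ex s v k d P Q P' Q' off"
  by (simp add: mv1_def)

lemma set_LDL: "set LDL = linedirs" by (simp add: LDL_def linedirs_def)
lemma set_DL: "set DL = dirs" by (simp add: DL_def dirs_def set_LDL)
lemma set_boardL: "set boardL = board" by (simp add: boardL_def board_def)

lemma body_cands: "body_ex s v k d P Q P' Q' off \<Longrightarrow> (P', Q', off) \<in> set (cands s v k d P Q)"
  unfolding body_ex_def cands_def Let_def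
  by (cases off; auto)

lemma body_grp: "body_ex s v k d P Q P' Q' off \<Longrightarrow> sh s v ` set (rng 0 k) \<subseteq> P"
  unfolding body_ex_def Let_def by simp

lemma mem_movesS: "(P', Q', off) \<in> set (movesS P Q) \<longleftrightarrow> (\<exists>s\<in>set boardL. \<exists>v\<in>set LDL. \<exists>k\<in>set [1,2,3]. \<exists>d\<in>set DL.
    sh s v ` set (rng 0 k) \<subseteq> P \<and> (P', Q', off) \<in> set (cands s v k d P Q) \<and> body_ex s v k d P Q P' Q' off)"
  unfolding movesS_def mem_concat4 mem_mv1 ..

lemma B: assumes "P \<subseteq> board"
  shows "abalone_move P Q P' Q' off \<longleftrightarrow> (P', Q', off) \<in> set (movesS P Q)"
proof
  assume "abalone_move P Q P' Q' off"
  then obtain s v k d where h: "v \<in> linedirs" "1 \<le> k" "k \<le> 3" "d \<in> dirs" "body_ex s v k d P Q P' Q' off"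
    unfolding A by blast
  have k: "k \<in> set [1,2,3]" using h(2,3) by auto
  have g: "sh s v ` set (rng 0 k) \<subseteq> P" using body_grp[OF h(5)] .
  have "s \<in> sh s v ` set (rng 0 k)" using h(2) by (force simp: rng_set sh_def)
  then have s: "s \<in> set boardL" using g assms set_boardL by blast
  show "(P', Q', off) \<in> set (movesS P Q)"
    unfolding mem_movesS using s k h(1,4,5) g body_cands[OF h(5)] set_LDL set_DL by blast
next
  assume "(P', Q', off) \<in> set (movesS P Q)"
  then obtain s v k d where "v \<in> set LDL" "k \<in> set [1,2,3]" "d \<in> set DL" "body_ex s v k d P Q P' Q' off"
    unfolding mem_movesS by blast
  moreover have "1 \<le> k \<and> k \<le> 3" using \<open>k \<in> set [1,2,3]\<close> by auto
  ultimately show "abalone_move P Q P' Q' off" unfolding A set_LDL set_DL by blast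
qed

lemma rng_eval: "rng 0 1 = [0]" "rng 0 2 = [0,1]" "rng 0 3 = [0,1,2]" "rng 1 1 = []" "rng 1 2 = [1]" "rng 1 3 = [1,2]"
  by (simp_all add: rng_def upto.simps)


definition eqS :: "cell set \<Rightarrow> cell set \<Rightarrow> bool" where "eqS A B \<longleftrightarrow> A \<subseteq> B \<and> B \<subseteq> A"

definition memM :: "cell set \<times> cell set \<times> bool \<Rightarrow> (cell set \<times> cell set \<times> bool) list \<Rightarrow> bool" where
  "memM x L = list_ex (\<lambda>(a,b,c). eqS a (fst x) \<and> eqS b (fst (snd x)) \<and> c = snd (snd x)) L"

definition memW :: "cell set \<times> cell set \<Rightarrow> (cell set \<times> cell set) list \<Rightarrow> bool" where
  "memW x L = list_ex (\<lambda>(a,b). eqS a (fst x) \<and> eqS b (snd x)) L"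

lemma memM_D: "memM x L \<Longrightarrow> x \<in> set L"
  by (cases x) (auto simp: memM_def list_ex_iff eqS_def)
lemma memW_D: "memW x L \<Longrightarrow> x \<in> set L"
  by (cases x) (auto simp: memW_def list_ex_iff eqS_def)

definition nodeok :: "(cell set \<times> cell set) list \<Rightarrow> cell set \<Rightarrow> cell set \<Rightarrow> cell set \<Rightarrow> cell set \<Rightarrow> bool" where
  "nodeok W B G B' G' \<longleftrightarrow> memM (B', G', False) (movesS B G) \<and> G' \<subseteq> board \<and> movesS G' B' \<noteq> [] \<and>
     list_all (\<lambda>(G'', B'', ob). \<not> ob \<and> memW (B'', G'') W) (movesS G' B')"

fun check :: "(cell set \<times> cell set) list \<Rightarrow> (cell set \<times> cell set \<times> cell set \<times> cell set \<times> bool) list \<Rightarrow> bool" where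
  "check W [] = True"
| "check W ((B, G, B', G', p) # cs) = ((if p then memM (B', G', True) (movesS B G) else nodeok W B G B' G') \<and> check ((B, G) # W) cs)"

lemma Bs: assumes "(P', Q', off) \<in> set (movesS P Q)" shows "abalone_move P Q P' Q' off"
proof -
  from assms obtain s v k d where "v \<in> set LDL" "k \<in> set [1,2,3]" "d \<in> set DL" "body_ex s v k d P Q P' Q' off"
    unfolding mem_movesS by blast
  moreover have "1 \<le> k \<and> k \<le> 3" using \<open>k \<in> set [1,2,3]\<close> by auto
  ultimately show "abalone_move P Q P' Q' off" unfolding A set_LDL set_DL by blast
qed

lemma nodeok_sound: assumes "nodeok W B G B' G'" "\<forall>(x,y)\<in>set W. black_wins x y"
  shows "black_wins B G"
proof (rule black_wins.step)
  show "abalone_move B G B' G' False" using assms(1) by (auto simp: nodeok_def dest!: memM_D intro: Bs)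
  from assms(1) obtain a b c where "(a,b,c) \<in> set (movesS G' B')" unfolding nodeok_def
    by (metis list.set_intros(1) neq_Nil_conv prod_cases3)
  then show "\<exists>G'' B'' off. abalone_move G' B' G'' B'' off" by (auto intro: Bs)
  show "\<forall>G'' B'' off. abalone_move G' B' G'' B'' off \<longrightarrow> \<not> off \<and> black_wins B'' G''"
  proof (intro allI impI)
    fix G'' B'' off assume "abalone_move G' B' G'' B'' off"
    then have m: "(G'', B'', off) \<in> set (movesS G' B')" using B[of G'] assms(1) by (simp add: nodeok_def)
    then show "\<not> off \<and> black_wins B'' G''" using assms unfolding nodeok_def list_all_iff
      by (fastforce dest: memW_D)
  qed
qed

lemma check_sound: "check W cs \<Longrightarrow> \<forall>(x,y)\<in>set W. black_wins x y \<Longrightarrow> \<forall>(B,G,_)\<in>set cs. black_wins B G"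
proof (induction W cs rule: check.induct)
  case (1 W) then show ?case by simp
next
  case (2 W B G B' G' p cs)
  have "black_wins B G"
  proof (cases p)
    case True then show ?thesis using 2(2) by (auto dest!: memM_D intro: black_wins.push_now Bs)
  next
    case False then show ?thesis using 2(2,3) nodeok_sound by auto
  qed
  then show ?case using 2 by auto
qed

definition cert :: "(cell set \<times> cell set \<times> cell set \<times> cell set \<times> bool) list" where
 "cert = [
  ({cE, cF, cI}, {cA, cC, cH}, {cC, cE, cF}, {cA, cH}, True),
  ({cE, cF, cI}, {cB, cD, cH}, {cD, cE, cI}, {cB, cH}, True),
  ({cE, cF, cI}, {cB, cC, cH}, {cC, cE, cF}, {cB, cH}, True),
  ({cE, cF, cI}, {cA, cB, cD}, {cD, cE, cI}, {cA, cB}, True),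
  ({cC, cE, cF}, {cA, cB, cH}, {cE, cF, cI}, {cA, cB, cH}, False),
  ({cC, cE, cF}, {cB, cD, cI}, {cC, cD, cE}, {cB, cI}, True),
  ({cC, cE, cF}, {cA, cD, cH}, {cC, cD, cE}, {cA, cH}, True),
  ({cC, cF, cG}, {cB, cE, cH}, {cC, cE, cF}, {cB, cD, cH}, False),
  ({cC, cF, cG}, {cA, cE, cI}, {cF, cG, cI}, {cA, cE}, True),
  ({cC, cE, cF}, {cB, cD, cH}, {cC, cD, cE}, {cB, cH}, True),
  ({cC, cE, cF}, {cA, cD, cI}, {cC, cD, cE}, {cA, cI}, True),
  ({cC, cF, cG}, {cA, cE, cH}, {cC, cE, cF}, {cA, cD, cH}, False),
  ({cC, cF, cG}, {cA, cD, cI}, {cF, cG, cI}, {cA, cD}, True),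
  ({cC, cF, cG}, {cB, cD, cH}, {cC, cE, cF}, {cB, cD, cH}, False)]"

lemmas evs = movesS_def mv1_def cands_def body_ex_def boardL_def LDL_def DL_def negc_def rng_eval sh_def
     cA_def cB_def cC_def cD_def cE_def cF_def cG_def cH_def cI_def cJ_def board_def eqS_def memM_def memW_def nodeok_def

lemma cert_ok: "check [] cert"
  by code_simp

definition isoL :: "cell set \<times> cell set \<Rightarrow> cell set \<times> cell set \<Rightarrow> bool" where
  "isoL X Y = list_ex (\<lambda>\<sigma>. eqS (\<sigma> ` fst X) (fst Y) \<and> eqS (\<sigma> ` snd X) (snd Y)) [id, sym_lr, sym_tb, sym_lr \<circ> sym_tb]"

lemma isoL_D: "isoL X Y \<Longrightarrow> isomorphic X Y"
  unfolding isoL_def isomorphic_def board_syms_def eqS_def by auto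

lemma gray_ok: "list_all (\<lambda>(G,B,ob). isoL (B,G) C2 \<or> isoL (B,G) C3 \<or> memW (B,G) (map (\<lambda>(x,y,_). (x,y)) cert))
    (movesS (snd C1) (fst C1))"
  by code_simp

theorem lemma5:
  assumes "abalone_move (snd C1) (fst C1) G B off"
    and "\<not> isomorphic (B, G) C2"
    and "\<not> isomorphic (B, G) C3"
  shows "black_wins B G"
proof -
  have "snd C1 \<subseteq> board" by (simp add: C1_def board_def)
  then have "(G, B, off) \<in> set (movesS (snd C1) (fst C1))" using assms(1) B by blast
  then have "isoL (B,G) C2 \<or> isoL (B,G) C3 \<or> memW (B,G) (map (\<lambda>(x,y,_). (x,y)) cert)"
    using gray_ok unfolding list_all_iff by fastforce
  then have "(B,G) \<in> set (map (\<lambda>(x,y,_). (x,y)) cert)" using assms(2,3) isoL_D memW_D by blast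
  moreover have "\<forall>(B,G,_)\<in>set cert. black_wins B G" using check_sound[OF cert_ok] by simp
  ultimately show ?thesis by auto
qed

end
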